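(* Let $f\in\mathcal{O}_0(2d)$. For every multi-index $\gamma\in\mathbb{N}^{2d}$ and every $m>0$ there exists $C_{\gamma,m}$ such that for all $Z\in\mathbb{R}^{2d}$, $$\Big|\int_{\mathbb{R}^{2d}}X^\gamma f(X)e^{-|X-Z|^2-iJZ\cdot X}dX\Big|\le C_{\gamma,m}(1+|Z|)^{-m}\sup_{|\alpha|\le m+|\gamma|,\ Y\in\mathbb{R}^{2d}}|\partial_Y^\alpha f(Y)|.$$
   Context: $\mathcal{O}_0(2d)$ is the set of smooth functions on $\mathbb{R}^{2d}$ all of whose derivatives (of every order) are bounded. $J=\begin{pmatrix}0&\mathbb{I}_d\\-\mathbb{I}_d&0\end{pmatrix}$ and $\cdot$ is the Euclidean scalar product. *)

theory Defs
  imports "HOL-Analysis.Analysis"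
begin

text \<open>Phase space R^{2d} is modelled as real ^ ('d + 'd): coordinates Inl i are
  the positions x_i, coordinates Inr i the momenta xi_i.\<close>

definition Jmat :: "real ^ ('d::finite + 'd) \<Rightarrow> real ^ ('d + 'd)" where
  "Jmat Z = (\<chi> k. case k of Inl i \<Rightarrow> Z $ Inr i | Inr i \<Rightarrow> - Z $ Inl i)"

definition partial_d :: "'n::finite \<Rightarrow> (real ^ 'n \<Rightarrow> complex) \<Rightarrow> real ^ 'n \<Rightarrow> complex" where
  "partial_d k f x = vector_derivative (\<lambda>t. f (x + t *\<^sub>R axis k 1)) (at 0)"

fun dpartial :: "'n::finite list \<Rightarrow> (real ^ 'n \<Rightarrow> complex) \<Rightarrow> real ^ 'n \<Rightarrow> complex" where
  "dpartial [] f = f"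
| "dpartial (k # ks) f = partial_d k (dpartial ks f)"

text \<open>A list containing each direction k exactly alpha k times (order is irrelevant for smooth f).\<close>
definition mi_list :: "('n::finite \<Rightarrow> nat) \<Rightarrow> 'n list" where
  "mi_list \<alpha> = (SOME ks. \<forall>k. count_list ks k = \<alpha> k)"

definition mderiv :: "('n::finite \<Rightarrow> nat) \<Rightarrow> (real ^ 'n \<Rightarrow> complex) \<Rightarrow> real ^ 'n \<Rightarrow> complex" where
  "mderiv \<alpha> f = dpartial (mi_list \<alpha>) f"

definition mi_len :: "('n::finite \<Rightarrow> nat) \<Rightarrow> nat" where
  "mi_len \<alpha> = (\<Sum>k\<in>UNIV. \<alpha> k)"

definition mpow :: "real ^ 'n::finite \<Rightarrow> ('n \<Rightarrow> nat) \<Rightarrow> real" where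
  "mpow X \<gamma> = (\<Prod>k\<in>UNIV. (X $ k) ^ \<gamma> k)"

text \<open>Every iterated partial derivative exists and is (Frechet) differentiable everywhere,
  hence f is C^infinity, and every iterated partial derivative is bounded.\<close>
definition O0 :: "(real ^ 'n::finite \<Rightarrow> complex) set" where
  "O0 = {f. \<forall>ks. (\<forall>x. dpartial ks f differentiable (at x)) \<and> bounded (range (dpartial ks f))}"

end

theory Submission
  imports Defs "HOL-Computational_Algebra.Polynomial" "HOL-Probability.Distributions"
begin


fun hp :: "nat \<Rightarrow> nat \<Rightarrow> real poly" where
  "hp b 0 = monom 1 b"
| "hp b (Suc i) = pderiv (hp b i) - [:0,2:] * hp b i"

definition psi :: "nat \<Rightarrow> nat \<Rightarrow> real \<Rightarrow> real" where
  "psi b i s = poly (hp b i) s * exp (- s\<^sup>2)"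

lemma psi_deriv: "(psi b i has_real_derivative psi b (Suc i) s) (at s)"
  unfolding psi_def
  by (auto intro!: derivative_eq_intros simp: algebra_simps power2_eq_square)

lemma psi0: "psi b 0 s = s ^ b * exp (- s\<^sup>2)"
  by (simp add: psi_def poly_monom)

lemma poly_bound: fixes p :: "real poly" shows "\<bar>poly p s\<bar> \<le> (\<Sum>i\<le>degree p. \<bar>coeff p i\<bar>) * (1 + \<bar>s\<bar>) ^ degree p"
proof -
  have "\<bar>poly p s\<bar> \<le> (\<Sum>i\<le>degree p. \<bar>coeff p i * s ^ i\<bar>)"
    by (subst poly_altdef) (rule sum_abs)
  also have "\<dots> \<le> (\<Sum>i\<le>degree p. \<bar>coeff p i\<bar> * (1 + \<bar>s\<bar>) ^ degree p)"
  proof (rule sum_mono)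
    fix i assume "i \<in> {..degree p}"
    then have "\<bar>s\<bar> ^ i \<le> (1 + \<bar>s\<bar>) ^ i" "(1 + \<bar>s\<bar>) ^ i \<le> (1 + \<bar>s\<bar>) ^ degree p"
      by (auto intro!: power_mono power_increasing)
    then show "\<bar>coeff p i * s ^ i\<bar> \<le> \<bar>coeff p i\<bar> * (1 + \<bar>s\<bar>) ^ degree p"
      by (auto simp: abs_mult power_abs intro!: mult_left_mono)
  qed
  finally show ?thesis by (simp add: sum_distrib_right)
qed

lemma pow_exp_bound: "(1 + \<bar>s\<bar>) ^ d \<le> exp (real d ^ 2 / 2) * exp (s ^ 2 / 2)"
proof -
  have "(1 + \<bar>s\<bar>) ^ d \<le> exp \<bar>s\<bar> ^ d"
    by (intro power_mono) auto
  also have "\<dots> = exp (real d * \<bar>s\<bar>)" by (simp add: exp_of_nat_mult)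
  also have "\<dots> \<le> exp (real d ^ 2 / 2 + s ^ 2 / 2)"
  proof -
    have "0 \<le> (real d - \<bar>s\<bar>)^2" by simp
    then have "real d * \<bar>s\<bar> \<le> real d ^ 2 / 2 + s ^ 2 / 2"
      by (simp add: power2_eq_square algebra_simps)
    then show ?thesis by simp
  qed
  finally show ?thesis by (simp add: exp_add)
qed

lemma psi_bound: "\<exists>K. \<forall>s. \<bar>psi b i s\<bar> \<le> K * exp (- s\<^sup>2 / 2)"
proof -
  define p where "p = hp b i"
  define K where "K = (\<Sum>i\<le>degree p. \<bar>coeff p i\<bar>) * exp (real (degree p) ^ 2 / 2)"
  have "\<bar>psi b i s\<bar> \<le> K * exp (- s\<^sup>2 / 2)" for s
  proof -
    have "\<bar>psi b i s\<bar> = \<bar>poly p s\<bar> * exp (- s\<^sup>2)" by (simp add: psi_def p_def abs_mult)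
    also have "\<dots> \<le> ((\<Sum>i\<le>degree p. \<bar>coeff p i\<bar>) * (exp (real (degree p) ^ 2 / 2) * exp (s ^ 2 / 2))) * exp (- s\<^sup>2)"
      by (intro mult_right_mono order.trans[OF poly_bound] mult_left_mono pow_exp_bound) (auto intro: sum_nonneg)
    also have "\<dots> = K * (exp (s ^ 2 / 2) * exp (- s\<^sup>2))" by (simp add: K_def)
    also have "exp (s ^ 2 / 2) * exp (- s\<^sup>2) = exp (- s\<^sup>2 / 2)" by (simp flip: exp_add)
    finally show ?thesis .
  qed
  then show ?thesis by blast
qed



lemma pascal_sum:
  fixes a b :: "nat \<Rightarrow> complex"
  shows "(\<Sum>i\<le>j. of_nat (j choose i) * (a (Suc i) * b (j - i) + a i * b (Suc (j - i))))
       = (\<Sum>i\<le>Suc j. of_nat (Suc j choose i) * a i * b (Suc j - i))"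
proof -
  have e1: "(\<Sum>i\<le>j. of_nat (j choose i) * a i * b (Suc j - i))
        = (\<Sum>i\<le>Suc j. of_nat (j choose i) * a i * b (Suc j - i))"
    by simp
  also have "\<dots> = a 0 * b (Suc j) + (\<Sum>i\<le>j. of_nat (j choose Suc i) * a (Suc i) * b (j - i))"
    by (subst sum.atMost_Suc_shift) simp
  finally have e1': "(\<Sum>i\<le>j. of_nat (j choose i) * a i * b (Suc j - i)) = 
      a 0 * b (Suc j) + (\<Sum>i\<le>j. of_nat (j choose Suc i) * a (Suc i) * b (j - i))" .
  have "(\<Sum>i\<le>Suc j. of_nat (Suc j choose i) * a i * b (Suc j - i))
      = a 0 * b (Suc j) + (\<Sum>i\<le>j. of_nat (Suc j choose Suc i) * a (Suc i) * b (j - i))"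
    by (subst sum.atMost_Suc_shift) simp
  also have "\<dots> = a 0 * b (Suc j) + (\<Sum>i\<le>j. of_nat (j choose i) * a (Suc i) * b (j - i))
        + (\<Sum>i\<le>j. of_nat (j choose Suc i) * a (Suc i) * b (j - i))"
    by (simp add: sum.distrib algebra_simps)
  finally have e2: "(\<Sum>i\<le>Suc j. of_nat (Suc j choose i) * a i * b (Suc j - i))
      = a 0 * b (Suc j) + (\<Sum>i\<le>j. of_nat (j choose i) * a (Suc i) * b (j - i))
        + (\<Sum>i\<le>j. of_nat (j choose Suc i) * a (Suc i) * b (j - i))" .
  have e3: "(\<Sum>i\<le>j. of_nat (j choose i) * (a (Suc i) * b (j - i) + a i * b (Suc (j - i))))
      = (\<Sum>i\<le>j. of_nat (j choose i) * a (Suc i) * b (j - i)) + (\<Sum>i\<le>j. of_nat (j choose i) * a i * b (Suc j - i))"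
    by (simp add: sum.distrib algebra_simps Suc_diff_le)
  show ?thesis using e1' e2 e3 by simp
qed

lemma leibniz_step:
  fixes u v :: "nat \<Rightarrow> real \<Rightarrow> complex"
  assumes u: "\<And>j t. (u j has_vector_derivative u (Suc j) t) (at t)"
    and v: "\<And>j t. (v j has_vector_derivative v (Suc j) t) (at t)"
  shows "((\<lambda>t. \<Sum>i\<le>j. of_nat (j choose i) * u i t * v (j - i) t) has_vector_derivative
          (\<Sum>i\<le>Suc j. of_nat (Suc j choose i) * u i t * v (Suc j - i) t)) (at t)"
proof -
  have "((\<lambda>t. \<Sum>i\<le>j. of_nat (j choose i) * u i t * v (j - i) t) has_vector_derivative
          (\<Sum>i\<le>j. of_nat (j choose i) * (u (Suc i) t * v (j - i) t + u i t * v (Suc (j - i)) t))) (at t)"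
  proof (rule has_vector_derivative_sum)
    fix i assume "i \<in> {..j}"
    have "((\<lambda>t. u i t * v (j - i) t) has_vector_derivative (u i t * v (Suc (j - i)) t + u (Suc i) t * v (j - i) t)) (at t)"
      using has_vector_derivative_mult[OF u[of i t] v[of "j - i" t]] by simp
    then have "((\<lambda>t. of_nat (j choose i) * (u i t * v (j - i) t)) has_vector_derivative
       of_nat (j choose i) * (u i t * v (Suc (j - i)) t + u (Suc i) t * v (j - i) t)) (at t)"
      by (rule has_vector_derivative_mult_right)
    then show "((\<lambda>t. of_nat (j choose i) * u i t * v (j - i) t) has_vector_derivative
       of_nat (j choose i) * (u (Suc i) t * v (j - i) t + u i t * v (Suc (j - i)) t)) (at t)"
      by (simp add: algebra_simps)
  qed
  then show ?thesis
    using pascal_sum[of j "\<lambda>i. u i t" "\<lambda>i. v i t"] by simp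
qed

definition dd :: "real \<Rightarrow> (real \<Rightarrow> complex) \<Rightarrow> real \<Rightarrow> complex" where
  "dd c g t = g (t + c) - g t"

lemma mvt_c:
  fixes g :: "real \<Rightarrow> complex"
  assumes d: "\<And>s. s \<in> closed_segment a b \<Longrightarrow> (g has_vector_derivative g' s) (at s)"
    and B: "\<And>s. s \<in> closed_segment a b \<Longrightarrow> cmod (g' s) \<le> B"
  shows "cmod (g b - g a) \<le> B * \<bar>b - a\<bar>"
proof -
  have "norm (g b - g a) \<le> B * norm (b - a)"
  proof (rule differentiable_bound[where f' = "\<lambda>s h. h *\<^sub>R g' s"])
    show "convex (closed_segment a b)" by simp
    fix x assume x: "x \<in> closed_segment a b"
    show "(g has_derivative (\<lambda>h. h *\<^sub>R g' x)) (at x within closed_segment a b)"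
      using d[OF x] unfolding has_vector_derivative_def by (rule has_derivative_at_withinI)
    have "onorm (\<lambda>h. h *\<^sub>R g' x) = onorm (\<lambda>h::real. h) * norm (g' x)"
      by (rule onorm_scaleR_left) simp
    also have "\<dots> = norm (g' x)" using onorm_id[where 'a=real] by simp
    finally show "onorm (\<lambda>h. h *\<^sub>R g' x) \<le> B" using B[OF x] by simp
  qed auto
  then show ?thesis by simp
qed

lemma iter_diff:
  fixes g :: "nat \<Rightarrow> real \<Rightarrow> complex"
  assumes "\<And>j t. (g j has_vector_derivative g (Suc j) t) (at t)"
    and "\<And>s. s \<in> closed_segment t (t + real N * c) \<Longrightarrow> cmod (g N s) \<le> B"
  shows "cmod ((dd c ^^ N) (g 0) t) \<le> \<bar>c\<bar> ^ N * B"
  using assms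
proof (induction N arbitrary: g B)
  case 0
  then show ?case by simp
next
  case (Suc N)
  define g' where "g' j = dd c (g j)" for j
  have sh: "((\<lambda>t. g j (t + c)) has_vector_derivative g (Suc j) (t + c)) (at t)" for j t
  proof -
    have "((\<lambda>t. t + c) has_vector_derivative 1) (at t)"
      by (auto intro!: derivative_eq_intros)
    from vector_diff_chain_at[OF this Suc.prems(1)[of j "t + c"]]
    show ?thesis by (simp add: o_def)
  qed
  have d': "(g' j has_vector_derivative g' (Suc j) t) (at t)" for j t
    unfolding g'_def dd_def by (intro has_vector_derivative_diff sh Suc.prems(1))
  have b': "cmod (g' N s) \<le> \<bar>c\<bar> * B" if s: "s \<in> closed_segment t (t + real N * c)" for s
  proof -
    have sub: "closed_segment s (s + c) \<subseteq> closed_segment t (t + real (Suc N) * c)"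
    proof -
      have h1: "0 \<le> c \<Longrightarrow> 0 \<le> c * real N" and h2: "c \<le> 0 \<Longrightarrow> c * real N \<le> 0"
        by (auto simp: mult_nonpos_nonneg)
      show ?thesis using s h1 h2 by (auto simp: closed_segment_eq_real_ivl algebra_simps split: if_splits; linarith)
    qed
    have "cmod (g N (s + c) - g N s) \<le> B * \<bar>(s + c) - s\<bar>"
      by (rule mvt_c[where g' = "g (Suc N)"]) (use Suc.prems sub in auto)
    then show ?thesis by (simp add: g'_def dd_def mult.commute)
  qed
  have "cmod ((dd c ^^ N) (g' 0) t) \<le> \<bar>c\<bar> ^ N * (\<bar>c\<bar> * B)"
    by (rule Suc.IH) (use d' b' in auto)
  moreover have "(dd c ^^ Suc N) (g 0) = (dd c ^^ N) (dd c (g 0))"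
    by (simp only: funpow_Suc_right o_apply)
  ultimately show ?case by (simp add: g'_def mult.assoc mult.commute mult.left_commute)
qed



lemma line_hvd:
  fixes g :: "'a::real_normed_vector \<Rightarrow> complex"
  assumes "(g has_derivative g') (at (x + t *\<^sub>R v))"
  shows "((\<lambda>s. g (x + s *\<^sub>R v)) has_vector_derivative g' v) (at t)"
proof -
  have l: "((\<lambda>s. x + s *\<^sub>R v) has_derivative (\<lambda>h. h *\<^sub>R v)) (at t)"
    by (auto intro!: derivative_eq_intros)
  have "((g \<circ> (\<lambda>s. x + s *\<^sub>R v)) has_derivative (g' \<circ> (\<lambda>h. h *\<^sub>R v))) (at t)"
    by (rule diff_chain_at[OF l]) (use assms in simp)
  moreover have "linear g'" using assms by (rule has_derivative_linear)
  then have "(g' \<circ> (\<lambda>h. h *\<^sub>R v)) = (\<lambda>h. h *\<^sub>R g' v)"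
    by (auto simp: fun_eq_iff linear_scale)
  ultimately show ?thesis unfolding has_vector_derivative_def by (simp add: o_def)
qed

lemma partial_d_line:
  fixes g :: "real ^ 'n::finite \<Rightarrow> complex"
  assumes "\<And>y. g differentiable (at y)"
  shows "((\<lambda>t. g (x + t *\<^sub>R axis k 1)) has_vector_derivative partial_d k g (x + t *\<^sub>R axis k 1)) (at t)"
proof -
  obtain g' where g': "(g has_derivative g') (at (x + t *\<^sub>R axis k 1))"
    using assms unfolding differentiable_def by blast
  have a: "((\<lambda>t. g (x + t *\<^sub>R axis k 1)) has_vector_derivative g' (axis k 1)) (at t)"
    by (rule line_hvd[OF g'])
  have b: "((\<lambda>s. g ((x + t *\<^sub>R axis k 1) + s *\<^sub>R axis k 1)) has_vector_derivative g' (axis k 1)) (at 0)"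
    by (rule line_hvd) (use g' in simp)
  have "partial_d k g (x + t *\<^sub>R axis k 1) = g' (axis k 1)"
    unfolding partial_d_def by (rule vector_derivative_at[OF b])
  with a show ?thesis by simp
qed

lemma dpartial_line:
  fixes f :: "real ^ 'n::finite \<Rightarrow> complex"
  assumes "\<And>ks y. dpartial ks f differentiable (at y)"
  shows "((\<lambda>t. dpartial (replicate j k) f (x + t *\<^sub>R axis k 1)) has_vector_derivative
           dpartial (replicate (Suc j) k) f (x + t *\<^sub>R axis k 1)) (at t)"
  using partial_d_line[of "dpartial (replicate j k) f" x k t] assms by simp

lemma count_list_rep: "count_list (replicate j k) l = (if l = k then j else 0)"
  by (induction j) auto

lemma count_list_all: "\<forall>x\<in>set xs. x = k \<Longrightarrow> count_list xs k = length xs"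
  by (induction xs) auto

lemma mi_list_single:
  fixes k :: "'n::finite"
  shows "mi_list (\<lambda>l. if l = k then j else 0) = replicate j k"
proof -
  let ?a = "\<lambda>l. if l = k then j else 0"
  have ex: "\<exists>ks. \<forall>l. count_list ks l = ?a l"
    by (rule exI[of _ "replicate j k"]) (auto simp: count_list_rep)
  have "\<forall>l. count_list (mi_list ?a) l = ?a l"
    unfolding mi_list_def by (rule someI_ex[OF ex])
  then have c: "\<And>l. count_list (mi_list ?a) l = ?a l" by blast
  have all: "\<forall>x\<in>set (mi_list ?a). x = k"
  proof
    fix x assume "x \<in> set (mi_list ?a)"
    then have "count_list (mi_list ?a) x \<noteq> 0" by (simp add: count_list_0_iff)
    then show "x = k" using c[of x] by (auto split: if_splits)
  qed
  then have "mi_list ?a = replicate (length (mi_list ?a)) k"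
    by (simp add: replicate_length_same)
  moreover have "length (mi_list ?a) = j"
  proof -
    have "count_list (mi_list ?a) k = length (mi_list ?a)"
      using all by (rule count_list_all)
    then show ?thesis using c[of k] by simp
  qed
  ultimately show ?thesis by simp
qed



lemma gauss_int: "integrable lborel (\<lambda>s::real. exp (- s\<^sup>2 / 4))"
proof -
  have "integrable lborel (\<lambda>x. sqrt (2 * pi * (sqrt 2)\<^sup>2) * normal_density 0 (sqrt 2) x)"
    by (rule integrable_mult_right) simp
  moreover have "(\<lambda>x. sqrt (2 * pi * (sqrt 2)\<^sup>2) * normal_density 0 (sqrt 2) x) = (\<lambda>s::real. exp (- s\<^sup>2 / 4))"
    by (auto simp: normal_density_def fun_eq_iff)
  ultimately show ?thesis by (simp only:)
qed

lemma prod_basis_vec: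
  fixes Y :: "real ^ 'n::finite"
  shows "(\<Prod>b\<in>Basis. h (Y \<bullet> b)) = (\<Prod>l\<in>UNIV. h (Y $ l))"
proof -
  have B: "(Basis :: (real ^ 'n) set) = (\<lambda>l. axis l 1) ` UNIV"
    by (auto simp: Basis_vec_def)
  have inj: "inj (\<lambda>l::'n. axis l (1::real))"
    by (auto simp: inj_def axis_eq_axis)
  show ?thesis unfolding B by (subst prod.reindex[OF inj]) (simp add: inner_axis o_def)
qed

lemma D_int: "integrable lborel (\<lambda>Y::real ^ 'n::finite. \<Prod>l\<in>UNIV. exp (- (Y $ l)\<^sup>2 / 4))"
proof -
  have m: "(\<lambda>Y::real ^ 'n::finite. \<Prod>l\<in>UNIV. exp (- (Y $ l)\<^sup>2 / 4)) \<in> borel_measurable lborel"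
    by measurable
  have "(\<integral>\<^sup>+Y. ennreal (norm (\<Prod>l\<in>UNIV. exp (- (Y $ l)\<^sup>2 / 4))) \<partial>(lborel :: (real ^ 'n) measure))
     = (\<integral>\<^sup>+Y. (\<Prod>b\<in>Basis. ennreal (exp (- (Y \<bullet> b)\<^sup>2 / 4))) \<partial>(lborel :: (real ^ 'n) measure))"
  proof (rule nn_integral_cong)
    fix Y :: "real ^ 'n"
    have "(\<Prod>b\<in>Basis. exp (- (Y \<bullet> b)\<^sup>2 / 4)) = (\<Prod>l\<in>UNIV. exp (- (Y $ l)\<^sup>2 / 4))"
      by (rule prod_basis_vec)
    then show "ennreal (norm (\<Prod>l\<in>UNIV. exp (- (Y $ l)\<^sup>2 / 4))) = (\<Prod>b\<in>Basis. ennreal (exp (- (Y \<bullet> b)\<^sup>2 / 4)))"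
      by (simp add: prod_ennreal abs_prod)
  qed
  also have "\<dots> = (\<Prod>b\<in>(Basis :: (real ^ 'n) set). \<integral>\<^sup>+s. ennreal (exp (- s\<^sup>2 / 4)) \<partial>lborel)"
    by (rule nn_integral_lborel_prod) auto
  also have "\<dots> < \<infinity>"
  proof -
    have "(\<integral>\<^sup>+s. ennreal (exp (- s\<^sup>2 / 4)) \<partial>lborel) < \<infinity>"
      using gauss_int unfolding integrable_iff_bounded by simp
    then show ?thesis by (simp add: less_top[symmetric] ennreal_prod_eq_top power_eq_top_ennreal)
  qed
  finally show ?thesis using m unfolding integrable_iff_bounded by simp
qed

lemma transl_int:
  fixes f :: "'a::euclidean_space \<Rightarrow> 'b::{banach, second_countable_topology}"
  assumes "integrable lborel f"
  shows "integrable lborel (\<lambda>x. f (c + x))" "(\<integral>x. f (c + x) \<partial>lborel) = (\<integral>x. f x \<partial>lborel)"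
proof -
  have fm: "f \<in> borel_measurable borel" using assms borel_measurable_integrable by auto
  have gm: "((+) c) \<in> measurable lborel borel" by simp
  show "integrable lborel (\<lambda>x. f (c + x))"
    using assms integrable_distr_eq[OF gm fm] lborel_distr_plus[of c] by simp
  show "(\<integral>x. f (c + x) \<partial>lborel) = (\<integral>x. f x \<partial>lborel)"
    using integral_distr[OF gm fm] lborel_distr_plus[of c] by simp
qed



definition DD :: "'a::euclidean_space \<Rightarrow> ('a \<Rightarrow> complex) \<Rightarrow> 'a \<Rightarrow> complex" where
  "DD h H Y = H (Y + h) - H Y"

lemma DD_step:
  fixes H E :: "'a::euclidean_space \<Rightarrow> complex"
  assumes int: "integrable lborel (\<lambda>Y. H Y * E Y)" and E: "\<And>Y. E (Y + h) = - E Y"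
  shows "integrable lborel (\<lambda>Y. DD h H Y * E Y)"
    and "(\<integral>Y. H Y * E Y \<partial>lborel) = - (1/2) * (\<integral>Y. DD h H Y * E Y \<partial>lborel)"
proof -
  let ?F = "\<lambda>Y. H Y * E Y"
  have eq: "DD h H Y * E Y = - ?F (h + Y) - ?F Y" for Y
    by (simp add: DD_def E add.commute algebra_simps)
  have i1: "integrable lborel (\<lambda>Y. ?F (h + Y))" by (rule transl_int(1)[OF int])
  have e1: "(\<integral>Y. ?F (h + Y) \<partial>lborel) = (\<integral>Y. ?F Y \<partial>lborel)" by (rule transl_int(2)[OF int])
  show "integrable lborel (\<lambda>Y. DD h H Y * E Y)"
    unfolding eq using i1 int by auto
  have "(\<integral>Y. DD h H Y * E Y \<partial>lborel) = (\<integral>Y. - ?F (h + Y) - ?F Y \<partial>lborel)"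
    unfolding eq ..
  also have "\<dots> = - (\<integral>Y. ?F (h + Y) \<partial>lborel) - (\<integral>Y. ?F Y \<partial>lborel)"
    using i1 int by (simp add: Bochner_Integration.integral_diff)
  also have "\<dots> = - 2 * (\<integral>Y. ?F Y \<partial>lborel)" using e1 by simp
  finally show "(\<integral>Y. H Y * E Y \<partial>lborel) = - (1/2) * (\<integral>Y. DD h H Y * E Y \<partial>lborel)" by simp
qed

lemma DD_iter:
  fixes H E :: "'a::euclidean_space \<Rightarrow> complex"
  assumes "integrable lborel (\<lambda>Y. H Y * E Y)" and "\<And>Y. E (Y + h) = - E Y"
  shows "integrable lborel (\<lambda>Y. (DD h ^^ N) H Y * E Y) \<and>
    (\<integral>Y. H Y * E Y \<partial>lborel) = (- (1/2)) ^ N * (\<integral>Y. (DD h ^^ N) H Y * E Y \<partial>lborel)"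
  using assms(1)
proof (induction N arbitrary: H)
  case 0
  then show ?case by simp
next
  case (Suc N)
  have s: "(DD h ^^ Suc N) H = (DD h ^^ N) (DD h H)"
    by (simp only: funpow_Suc_right o_apply)
  note st = DD_step[OF Suc.prems assms(2)]
  from Suc.IH[OF st(1)] st(2) show ?case unfolding s by simp
qed

lemma DD_line:
  fixes H :: "'a::euclidean_space \<Rightarrow> complex"
  shows "(DD (c *\<^sub>R v) ^^ N) H (Y + t *\<^sub>R v) = (dd c ^^ N) (\<lambda>s. H (Y + s *\<^sub>R v)) t"
proof (induction N arbitrary: H t)
  case 0
  then show ?case by simp
next
  case (Suc N)
  have s1: "(DD (c *\<^sub>R v) ^^ Suc N) H = (DD (c *\<^sub>R v) ^^ N) (DD (c *\<^sub>R v) H)"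
    by (simp only: funpow_Suc_right o_apply)
  have s2: "(dd c ^^ Suc N) (\<lambda>s. H (Y + s *\<^sub>R v)) = (dd c ^^ N) (dd c (\<lambda>s. H (Y + s *\<^sub>R v)))"
    by (simp only: funpow_Suc_right o_apply)
  have s3: "(\<lambda>s. DD (c *\<^sub>R v) H (Y + s *\<^sub>R v)) = dd c (\<lambda>s. H (Y + s *\<^sub>R v))"
    by (auto simp: fun_eq_iff DD_def dd_def algebra_simps)
  show ?case unfolding s1 s2 Suc.IH s3 ..
qed



lemma coord_bound:
  fixes y z Zn :: real
  assumes "\<bar>z\<bar> \<le> Zn"
  shows "\<bar>y + z\<bar> ^ b * exp (- y\<^sup>2) \<le> ((1 + Zn) ^ b * exp (real b ^ 2 / 2)) * exp (- y\<^sup>2 / 4)"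
proof -
  have Zn: "0 \<le> Zn" using assms by linarith
  have "\<bar>y + z\<bar> \<le> (1 + Zn) * (1 + \<bar>y\<bar>)"
    using assms Zn by (simp add: algebra_simps) (smt (verit) mult_nonneg_nonneg abs_ge_zero)
  then have "\<bar>y + z\<bar> ^ b \<le> ((1 + Zn) * (1 + \<bar>y\<bar>)) ^ b" by (intro power_mono) auto
  also have "\<dots> = (1 + Zn) ^ b * (1 + \<bar>y\<bar>) ^ b" by (simp add: power_mult_distrib)
  also have "\<dots> \<le> (1 + Zn) ^ b * (exp (real b ^ 2 / 2) * exp (y ^ 2 / 2))"
    by (intro mult_left_mono pow_exp_bound) (use Zn in auto)
  finally have "\<bar>y + z\<bar> ^ b * exp (- y\<^sup>2) \<le> (1 + Zn) ^ b * (exp (real b ^ 2 / 2) * exp (y ^ 2 / 2)) * exp (- y\<^sup>2)"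
    by (intro mult_right_mono) auto
  also have "\<dots> = ((1 + Zn) ^ b * exp (real b ^ 2 / 2)) * (exp (y ^ 2 / 2) * exp (- y\<^sup>2))"
    by (simp add: algebra_simps)
  also have "exp (y ^ 2 / 2) * exp (- y\<^sup>2) = exp (- y\<^sup>2 / 2)" by (simp flip: exp_add)
  also have "\<dots> \<le> exp (- y\<^sup>2 / 4)" by simp
  finally show ?thesis using Zn by (simp add: mult_left_mono)
qed

lemma norm_sq_vec: "(norm (Y :: real ^ 'n::finite))\<^sup>2 = (\<Sum>l\<in>UNIV. (Y $ l)\<^sup>2)"
  by (simp only: power2_norm_eq_inner inner_vec_def) (simp add: power2_eq_square)

lemma exp_norm_sq: "exp (- (norm (Y :: real ^ 'n::finite))\<^sup>2) = (\<Prod>l\<in>UNIV. exp (- (Y $ l)\<^sup>2))"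
  by (simp add: norm_sq_vec exp_sum flip: sum_negf)

lemma vec_line_nth: "(Y + t *\<^sub>R axis k 1) $ l = (if l = k then Y $ l + t else (Y $ l :: real))"
  by (simp add: axis_def)

definition qf :: "nat \<Rightarrow> real \<Rightarrow> nat \<Rightarrow> real \<Rightarrow> real" where
  "qf a z i s = (\<Sum>b\<le>a. of_nat (a choose b) * z ^ (a - b) * psi b i s)"

lemma qf0: "qf a z 0 s = (s + z) ^ a * exp (- s\<^sup>2)"
  by (simp add: qf_def psi0 binomial_ring sum_distrib_right sum_distrib_left algebra_simps)

lemma qf_deriv: "(qf a z i has_real_derivative qf a z (Suc i) s) (at s)"
  unfolding qf_def
  by (intro DERIV_sum DERIV_cmult psi_deriv)

lemma psi_unif: "\<exists>K\<ge>0. \<forall>b\<le>Bb. \<forall>i\<le>Bi. \<forall>s. \<bar>psi b i s\<bar> \<le> K * exp (- s\<^sup>2 / 2)"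
proof -
  have "\<forall>b i. \<exists>K. \<forall>s. \<bar>psi b i s\<bar> \<le> K * exp (- s\<^sup>2 / 2)" using psi_bound by blast
  then obtain Kf where Kf: "\<And>b i s. \<bar>psi b i s\<bar> \<le> Kf b i * exp (- s\<^sup>2 / 2)" by metis
  define K where "K = (\<Sum>b\<le>Bb. \<Sum>i\<le>Bi. \<bar>Kf b i\<bar>)"
  have "\<bar>psi b i s\<bar> \<le> K * exp (- s\<^sup>2 / 2)" if "b \<le> Bb" "i \<le> Bi" for b i s
  proof -
    have "Kf b i \<le> \<bar>Kf b i\<bar>" by simp
    also have "\<bar>Kf b i\<bar> \<le> (\<Sum>i\<le>Bi. \<bar>Kf b i\<bar>)"
      by (rule member_le_sum) (use that in auto)
    also have "\<dots> \<le> K" unfolding K_def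
      by (rule member_le_sum[where f = "\<lambda>b. \<Sum>i\<le>Bi. \<bar>Kf b i\<bar>"]) (use that in \<open>auto intro: sum_nonneg\<close>)
    finally have "Kf b i * exp (- s\<^sup>2 / 2) \<le> K * exp (- s\<^sup>2 / 2)" by simp
    with Kf show ?thesis by (rule order.trans)
  qed
  moreover have "K \<ge> 0" unfolding K_def by (intro sum_nonneg) auto
  ultimately show ?thesis by blast
qed

lemma qf_bound:
  assumes K: "\<forall>b\<le>Bb. \<forall>i\<le>Bi. \<forall>s. \<bar>psi b i s\<bar> \<le> K * exp (- s\<^sup>2 / 2)" and "a \<le> Bb" "i \<le> Bi"
  shows "\<bar>qf a z i s\<bar> \<le> K * (1 + \<bar>z\<bar>) ^ a * exp (- s\<^sup>2 / 2)"
proof -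
  have "\<bar>qf a z i s\<bar> \<le> (\<Sum>b\<le>a. \<bar>of_nat (a choose b) * z ^ (a - b) * psi b i s\<bar>)"
    unfolding qf_def by (rule sum_abs)
  also have "\<dots> \<le> (\<Sum>b\<le>a. of_nat (a choose b) * \<bar>z\<bar> ^ (a - b) * (K * exp (- s\<^sup>2 / 2)))"
  proof (rule sum_mono)
    fix b assume "b \<in> {..a}"
    then have "\<bar>psi b i s\<bar> \<le> K * exp (- s\<^sup>2 / 2)" using K assms by auto
    then show "\<bar>of_nat (a choose b) * z ^ (a - b) * psi b i s\<bar> \<le> of_nat (a choose b) * \<bar>z\<bar> ^ (a - b) * (K * exp (- s\<^sup>2 / 2))"
      by (simp add: abs_mult power_abs mult_left_mono)
  qed
  also have "\<dots> = (\<Sum>b\<le>a. of_nat (a choose b) * 1 ^ b * \<bar>z\<bar> ^ (a - b)) * (K * exp (- s\<^sup>2 / 2))"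
    by (simp add: sum_distrib_right)
  also have "(\<Sum>b\<le>a. of_nat (a choose b) * 1 ^ b * \<bar>z\<bar> ^ (a - b)) = (1 + \<bar>z\<bar>) ^ a"
    by (rule binomial_ring[symmetric])
  finally show ?thesis by (simp add: algebra_simps)
qed

lemma shift_gauss:
  fixes y s :: real and N :: nat
  assumes "\<bar>s\<bar> \<le> real N"
  shows "exp (- (y + s)\<^sup>2 / 2) \<le> exp (real N ^ 2 / 2) * exp (- y\<^sup>2 / 4)"
proof -
  have "s\<^sup>2 \<le> (real N)\<^sup>2" using assms by (metis abs_ge_zero power2_abs power_mono)
  moreover have "0 \<le> (y + 2 * s)\<^sup>2" by simp
  ultimately have "- (y + s)\<^sup>2 / 2 \<le> real N ^ 2 / 2 + - y\<^sup>2 / 4"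
  proof -
    have "(y + s)\<^sup>2 = y\<^sup>2 + 2 * (y * s) + s\<^sup>2" "(y + 2 * s)\<^sup>2 = y\<^sup>2 + 4 * (y * s) + 4 * s\<^sup>2"
      by (simp_all add: power2_eq_square algebra_simps)
    then show ?thesis using \<open>s\<^sup>2 \<le> (real N)\<^sup>2\<close> \<open>0 \<le> (y + 2 * s)\<^sup>2\<close> by linarith
  qed
  then show ?thesis by (simp flip: exp_add)
qed



definition Gr :: "('n::finite \<Rightarrow> nat) \<Rightarrow> real ^ 'n \<Rightarrow> real ^ 'n \<Rightarrow> real" where
  "Gr \<gamma> Z Y = (\<Prod>l\<in>UNIV. (Y $ l + Z $ l) ^ \<gamma> l) * exp (- (norm Y)\<^sup>2)"

definition Gf :: "('n::finite \<Rightarrow> nat) \<Rightarrow> (real ^ 'n \<Rightarrow> complex) \<Rightarrow> real ^ 'n \<Rightarrow> real ^ 'n \<Rightarrow> complex" where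
  "Gf \<gamma> f Z Y = of_real (Gr \<gamma> Z Y) * f (Z + Y)"

definition Tc :: "('n::finite \<Rightarrow> nat) \<Rightarrow> real ^ 'n \<Rightarrow> real" where
  "Tc \<gamma> Z = (\<Prod>l\<in>UNIV. (1 + norm Z) ^ \<gamma> l * exp (real (\<gamma> l) ^ 2 / 2))"

definition Dg :: "real ^ 'n::finite \<Rightarrow> real" where
  "Dg Y = (\<Prod>l\<in>UNIV. exp (- (Y $ l)\<^sup>2 / 4))"

lemma Tc_Dg: "Tc \<gamma> Z * Dg Y = (\<Prod>l\<in>UNIV. ((1 + norm Z) ^ \<gamma> l * exp (real (\<gamma> l) ^ 2 / 2)) * exp (- (Y $ l)\<^sup>2 / 4))"
  by (simp add: Tc_def Dg_def prod.distrib)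

lemma Tc_nonneg: "0 \<le> Tc \<gamma> Z" by (simp add: Tc_def prod_nonneg)
lemma Dg_nonneg: "0 \<le> Dg Y" by (simp add: Dg_def prod_nonneg)

lemma Gr_abs: "\<bar>Gr \<gamma> Z Y\<bar> \<le> Tc \<gamma> Z * Dg Y"
proof -
  have "\<bar>Gr \<gamma> Z Y\<bar> = (\<Prod>l\<in>UNIV. \<bar>Y $ l + Z $ l\<bar> ^ \<gamma> l * exp (- (Y $ l)\<^sup>2))"
    by (simp add: Gr_def exp_norm_sq abs_mult abs_prod power_abs prod.distrib)
  also have "\<dots> \<le> (\<Prod>l\<in>UNIV. ((1 + norm Z) ^ \<gamma> l * exp (real (\<gamma> l) ^ 2 / 2)) * exp (- (Y $ l)\<^sup>2 / 4))"
    by (intro prod_mono conjI coord_bound component_le_norm_cart) auto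
  finally show ?thesis by (simp add: Tc_Dg)
qed

lemma Gf_bound:
  assumes "\<And>x. cmod (f x) \<le> S"
  shows "cmod (Gf \<gamma> f Z Y) \<le> S * (Tc \<gamma> Z * Dg Y)"
proof -
  have "cmod (Gf \<gamma> f Z Y) = \<bar>Gr \<gamma> Z Y\<bar> * cmod (f (Z + Y))"
    by (simp add: Gf_def norm_mult)
  also have "\<dots> \<le> (Tc \<gamma> Z * Dg Y) * S"
    by (intro mult_mono Gr_abs assms) (auto intro: Tc_nonneg Dg_nonneg mult_nonneg_nonneg)
  finally show ?thesis by (simp add: mult.commute)
qed

lemma line_split:
  fixes Y Z :: "real ^ 'n::finite"
  shows "Gf \<gamma> f Z (Y + t *\<^sub>R axis k 1) =
    of_real (\<Prod>l\<in>UNIV - {k}. (Y $ l + Z $ l) ^ \<gamma> l * exp (- (Y $ l)\<^sup>2)) *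
    of_real (qf (\<gamma> k) (Z $ k) 0 (Y $ k + t)) * f ((Z + Y) + t *\<^sub>R axis k 1)"
proof -
  let ?Yt = "Y + t *\<^sub>R axis k 1"
  have "Gr \<gamma> Z ?Yt = (\<Prod>l\<in>UNIV. (?Yt $ l + Z $ l) ^ \<gamma> l * exp (- (?Yt $ l)\<^sup>2))"
    by (simp add: Gr_def exp_norm_sq prod.distrib)
  also have "\<dots> = ((?Yt $ k + Z $ k) ^ \<gamma> k * exp (- (?Yt $ k)\<^sup>2)) *
       (\<Prod>l\<in>UNIV - {k}. (?Yt $ l + Z $ l) ^ \<gamma> l * exp (- (?Yt $ l)\<^sup>2))"
    by (rule prod.remove) auto
  also have "(\<Prod>l\<in>UNIV - {k}. (?Yt $ l + Z $ l) ^ \<gamma> l * exp (- (?Yt $ l)\<^sup>2))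
      = (\<Prod>l\<in>UNIV - {k}. (Y $ l + Z $ l) ^ \<gamma> l * exp (- (Y $ l)\<^sup>2))"
    by (rule prod.cong) (auto simp: axis_def)
  also have "(?Yt $ k + Z $ k) ^ \<gamma> k * exp (- (?Yt $ k)\<^sup>2) = qf (\<gamma> k) (Z $ k) 0 (Y $ k + t)"
    by (simp add: qf0 vec_line_nth)
  finally show ?thesis
    by (simp add: Gf_def add.assoc mult.commute mult.left_commute)
qed

lemma line_bound:
  fixes f :: "real ^ 'n::finite \<Rightarrow> complex" and Z Y :: "real ^ 'n"
  assumes fd: "\<And>ks x. dpartial ks f differentiable (at x)"
    and fS: "\<And>j x. j \<le> N \<Longrightarrow> cmod (dpartial (replicate j k) f x) \<le> S"
    and K: "\<forall>b\<le>Bb. \<forall>i\<le>Bi. \<forall>s. \<bar>psi b i s\<bar> \<le> K * exp (- s\<^sup>2 / 2)" "\<gamma> k \<le> Bb" "N \<le> Bi"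
    and K0: "0 \<le> K"
    and c: "\<bar>c\<bar> \<le> 1"
  shows "cmod ((DD (c *\<^sub>R axis k 1) ^^ N) (Gf \<gamma> f Z) Y)
     \<le> \<bar>c\<bar> ^ N * (S * 2 ^ N * K * exp (real N ^ 2 / 2) * (Tc \<gamma> Z * Dg Y))"
proof -
  define a where "a = \<gamma> k"
  define z where "z = Z $ k"
  define A where "A = (\<Prod>l\<in>UNIV - {k}. (Y $ l + Z $ l) ^ \<gamma> l * exp (- (Y $ l)\<^sup>2))"
  define u where "u i t = complex_of_real (qf a z i (Y $ k + t))" for i t
  define v where "v j t = dpartial (replicate j k) f ((Z + Y) + t *\<^sub>R axis k 1)" for j t
  define gs where "gs j t = of_real A * (\<Sum>i\<le>j. of_nat (j choose i) * u i t * v (j - i) t)" for j t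
  have "cmod (dpartial (replicate 0 k) f Y) \<le> S" by (rule fS) simp
  then have S0: "0 \<le> S" by (meson norm_ge_zero order.trans)
  have u': "(u j has_vector_derivative u (Suc j) t) (at t)" for j t
  proof -
    have "((\<lambda>t. Y $ k + t) has_real_derivative 1) (at t)" by (auto intro!: derivative_eq_intros)
    from DERIV_chain2[OF qf_deriv this]
    have "((\<lambda>t. qf a z j (Y $ k + t)) has_real_derivative qf a z (Suc j) (Y $ k + t)) (at t)" by simp
    then show ?thesis unfolding u_def by (rule has_vector_derivative_of_real[THEN has_vector_derivative_eq_rhs]) simp
  qed
  have v': "(v j has_vector_derivative v (Suc j) t) (at t)" for j t
    unfolding v_def by (rule dpartial_line[OF fd])
  have gs': "(gs j has_vector_derivative gs (Suc j) t) (at t)" for j t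
    unfolding gs_def by (intro has_vector_derivative_mult_right leibniz_step u' v')
  have gs0: "gs 0 = (\<lambda>t. Gf \<gamma> f Z (Y + t *\<^sub>R axis k 1))"
    by (auto simp: fun_eq_iff gs_def u_def v_def line_split A_def a_def z_def)
  have dl: "(DD (c *\<^sub>R axis k 1) ^^ N) (Gf \<gamma> f Z) Y = (dd c ^^ N) (gs 0) 0"
    using DD_line[where c=c and v="axis k 1" and N=N and H="Gf \<gamma> f Z" and Y=Y and t=0] unfolding gs0 by simp
  have Aabs: "\<bar>A\<bar> \<le> (\<Prod>l\<in>UNIV - {k}. ((1 + norm Z) ^ \<gamma> l * exp (real (\<gamma> l) ^ 2 / 2)) * exp (- (Y $ l)\<^sup>2 / 4))"
    unfolding A_def abs_prod
    by (intro prod_mono conjI order.trans[OF _ coord_bound[OF component_le_norm_cart]]) (auto simp: abs_mult power_abs)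
  have TD: "\<bar>A\<bar> * ((1 + \<bar>z\<bar>) ^ a * exp (- (Y $ k)\<^sup>2 / 4)) \<le> Tc \<gamma> Z * Dg Y"
  proof -
    have "(1 + \<bar>z\<bar>) ^ a \<le> (1 + norm Z) ^ a" unfolding z_def
      by (intro power_mono) (auto simp: component_le_norm_cart)
    also have "\<dots> \<le> (1 + norm Z) ^ a * exp (real a ^ 2 / 2)"
    proof -
      have e1: "1 \<le> exp (real a ^ 2 / 2)" by simp
      show ?thesis using mult_left_mono[OF e1, of "(1 + norm Z) ^ a"] by simp
    qed
    finally have "(1 + \<bar>z\<bar>) ^ a * exp (- (Y $ k)\<^sup>2 / 4) \<le> ((1 + norm Z) ^ a * exp (real a ^ 2 / 2)) * exp (- (Y $ k)\<^sup>2 / 4)"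
      by simp
    then have "\<bar>A\<bar> * ((1 + \<bar>z\<bar>) ^ a * exp (- (Y $ k)\<^sup>2 / 4)) \<le>
      (\<Prod>l\<in>UNIV - {k}. ((1 + norm Z) ^ \<gamma> l * exp (real (\<gamma> l) ^ 2 / 2)) * exp (- (Y $ k)\<^sup>2 / 4)) * 0 +
      (\<Prod>l\<in>UNIV - {k}. ((1 + norm Z) ^ \<gamma> l * exp (real (\<gamma> l) ^ 2 / 2)) * exp (- (Y $ l)\<^sup>2 / 4)) *
         (((1 + norm Z) ^ a * exp (real a ^ 2 / 2)) * exp (- (Y $ k)\<^sup>2 / 4))"
      using Aabs by (simp add: mult_mono)
    also have "\<dots> = Tc \<gamma> Z * Dg Y"
      unfolding Tc_Dg by (simp add: prod.remove[of UNIV k] a_def mult.commute)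
    finally show ?thesis .
  qed
  have bnd: "cmod (gs N s) \<le> S * 2 ^ N * K * exp (real N ^ 2 / 2) * (Tc \<gamma> Z * Dg Y)"
    if s: "s \<in> closed_segment 0 (0 + real N * c)" for s
  proof -
    have sN: "\<bar>s\<bar> \<le> real N"
    proof -
      have "\<bar>real N * c\<bar> \<le> real N" using c by (simp add: abs_mult mult_left_le)
      then show ?thesis using s by (auto simp: closed_segment_eq_real_ivl split: if_splits)
    qed
    let ?e = "exp (- (Y $ k + s)\<^sup>2 / 2)"
    have "cmod (gs N s) \<le> \<bar>A\<bar> * (\<Sum>i\<le>N. of_nat (N choose i) * (K * (1 + \<bar>z\<bar>) ^ a * ?e) * S)"
    proof -
      have "cmod (\<Sum>i\<le>N. of_nat (N choose i) * u i s * v (N - i) s) \<le> (\<Sum>i\<le>N. cmod (of_nat (N choose i) * u i s * v (N - i) s))"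
        by (rule norm_sum)
      also have "\<dots> \<le> (\<Sum>i\<le>N. of_nat (N choose i) * (K * (1 + \<bar>z\<bar>) ^ a * ?e) * S)"
      proof (rule sum_mono)
        fix i assume i: "i \<in> {..N}"
        have "cmod (u i s) \<le> K * (1 + \<bar>z\<bar>) ^ a * ?e"
          unfolding u_def norm_of_real by (rule qf_bound[OF K(1)]) (use K i in \<open>auto simp: a_def\<close>)
        moreover have "cmod (v (N - i) s) \<le> S" unfolding v_def by (rule fS) simp
        ultimately have "cmod (u i s) * cmod (v (N - i) s) \<le> (K * (1 + \<bar>z\<bar>) ^ a * ?e) * S"
          by (intro mult_mono) (use K0 in auto)
        then show "cmod (of_nat (N choose i) * u i s * v (N - i) s) \<le> of_nat (N choose i) * (K * (1 + \<bar>z\<bar>) ^ a * ?e) * S"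
          by (simp add: norm_mult mult.assoc mult_left_mono)
      qed
      finally show ?thesis unfolding gs_def by (simp add: norm_mult mult_left_mono)
    qed
    also have "\<dots> = \<bar>A\<bar> * (2 ^ N * (K * (1 + \<bar>z\<bar>) ^ a * ?e) * S)"
      by (simp add: sum_distrib_right[symmetric] choose_row_sum flip: of_nat_sum)
    also have "\<dots> \<le> \<bar>A\<bar> * (2 ^ N * (K * (1 + \<bar>z\<bar>) ^ a * (exp (real N ^ 2 / 2) * exp (- (Y $ k)\<^sup>2 / 4))) * S)"
      by (intro mult_left_mono mult_right_mono shift_gauss sN) (use K0 S0 in auto)
    also have "\<dots> = (S * 2 ^ N * K * exp (real N ^ 2 / 2)) * (\<bar>A\<bar> * ((1 + \<bar>z\<bar>) ^ a * exp (- (Y $ k)\<^sup>2 / 4)))"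
      by (simp add: algebra_simps)
    also have "\<dots> \<le> (S * 2 ^ N * K * exp (real N ^ 2 / 2)) * (Tc \<gamma> Z * Dg Y)"
      by (intro mult_left_mono TD) (use K0 S0 in auto)
    finally show ?thesis .
  qed
  have "cmod ((dd c ^^ N) (gs 0) 0) \<le> \<bar>c\<bar> ^ N * (S * 2 ^ N * K * exp (real N ^ 2 / 2) * (Tc \<gamma> Z * Dg Y))"
    by (rule iter_diff[OF gs' bnd]) auto
  then show ?thesis unfolding dl .
qed



definition Ew :: "real ^ 'n::finite \<Rightarrow> real ^ 'n \<Rightarrow> complex" where
  "Ew w Y = exp (- \<i> * complex_of_real (w \<bullet> Y))"

lemma Ew_norm: "cmod (Ew w Y) = 1"
  by (simp add: Ew_def)

lemma Ew_shift:
  assumes "w $ k \<noteq> 0"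
  shows "Ew w (Y + (pi / w $ k) *\<^sub>R axis k 1) = - Ew w Y"
proof -
  have "w \<bullet> (Y + (pi / w $ k) *\<^sub>R axis k 1) = w \<bullet> Y + pi"
    using assms by (simp add: inner_add_right inner_axis)
  then have "Ew w (Y + (pi / w $ k) *\<^sub>R axis k 1) = Ew w Y * exp (- (\<i> * of_real pi))"
    by (simp add: Ew_def algebra_simps flip: exp_add)
  also have "exp (- (\<i> * of_real pi)) = -1"
    by (simp add: exp_minus)
  finally show ?thesis by simp
qed

lemma Tc_eq: "Tc \<gamma> Z = (1 + norm Z) ^ (\<Sum>l\<in>UNIV. \<gamma> l) * (\<Prod>l\<in>UNIV. exp (real (\<gamma> l) ^ 2 / 2))"
  by (simp add: Tc_def prod.distrib power_sum)

lemma Gf_cont: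
  fixes f :: "real ^ 'n::finite \<Rightarrow> complex"
  assumes "\<And>x. f differentiable (at x)"
  shows "continuous_on UNIV (\<lambda>Y. Gf \<gamma> f Z Y * Ew w Y)"
proof -
  have cf: "continuous_on UNIV f"
    using assms by (simp add: continuous_at_imp_continuous_on differentiable_imp_continuous_within)
  have "continuous_on UNIV (\<lambda>Y. f (Z + Y))"
    by (rule continuous_on_compose2[OF cf]) (auto intro!: continuous_intros)
  then show ?thesis unfolding Gf_def Gr_def Ew_def
    by (intro continuous_intros) auto
qed

lemma GE_int:
  fixes f :: "real ^ 'n::finite \<Rightarrow> complex"
  assumes "\<And>x. f differentiable (at x)" and "\<And>x. cmod (f x) \<le> S"
  shows "integrable lborel (\<lambda>Y. Gf \<gamma> f Z Y * Ew w Y)"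
proof (rule Bochner_Integration.integrable_bound)
  show "integrable lborel (\<lambda>Y. S * Tc \<gamma> Z * Dg Y)"
    unfolding Dg_def by (intro integrable_mult_right D_int)
  show "(\<lambda>Y. Gf \<gamma> f Z Y * Ew w Y) \<in> borel_measurable lborel"
    using borel_measurable_continuous_onI[OF Gf_cont[OF assms(1)]] by simp
  have S0: "0 \<le> S" using assms(2) by (meson norm_ge_zero order.trans)
  show "AE Y in lborel. norm (Gf \<gamma> f Z Y * Ew w Y) \<le> norm (S * Tc \<gamma> Z * Dg Y)"
  proof (intro AE_I2)
    fix Y
    have "cmod (Gf \<gamma> f Z Y) \<le> S * (Tc \<gamma> Z * Dg Y)" by (rule Gf_bound) (rule assms(2))
    then show "norm (Gf \<gamma> f Z Y * Ew w Y) \<le> norm (S * Tc \<gamma> Z * Dg Y)"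
      using S0 Tc_nonneg[of \<gamma> Z] Dg_nonneg[of Y] by (simp add: norm_mult Ew_norm abs_mult mult.assoc)
  qed
qed



lemma exists_max_coord:
  fixes w :: "real ^ 'n::finite"
  shows "\<exists>k. \<forall>l. \<bar>w $ l\<bar> \<le> \<bar>w $ k\<bar>"
proof -
  let ?M = "Max (range (\<lambda>l. \<bar>w $ l\<bar>))"
  have "?M \<in> range (\<lambda>l. \<bar>w $ l\<bar>)" by (rule Max_in) auto
  then obtain k where "?M = \<bar>w $ k\<bar>" by blast
  moreover have "\<bar>w $ l\<bar> \<le> ?M" for l by (rule Max_ge) auto
  ultimately show ?thesis by metis
qed

lemma norm_le_maxcoord:
  fixes w :: "real ^ 'n::finite"
  assumes "\<forall>l. \<bar>w $ l\<bar> \<le> \<bar>w $ k\<bar>"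
  shows "norm w \<le> sqrt (real CARD('n)) * \<bar>w $ k\<bar>"
proof -
  have "(norm w)\<^sup>2 = (\<Sum>l\<in>UNIV. (w $ l)\<^sup>2)" by (rule norm_sq_vec)
  also have "\<dots> \<le> (\<Sum>l\<in>(UNIV::'n set). (w $ k)\<^sup>2)"
  proof (rule sum_mono)
    fix l :: 'n
    have "\<bar>w $ l\<bar>\<^sup>2 \<le> \<bar>w $ k\<bar>\<^sup>2" using assms by (intro power_mono) auto
    then show "(w $ l)\<^sup>2 \<le> (w $ k)\<^sup>2" by simp
  qed
  also have "\<dots> = (sqrt (real CARD('n)) * \<bar>w $ k\<bar>)\<^sup>2"
    by (simp add: power_mult_distrib)
  finally show ?thesis
    by (rule power2_le_imp_le) simp
qed

lemma integrand_shift: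
  fixes f :: "real ^ 'n::finite \<Rightarrow> complex" and Z Y w :: "real ^ 'n"
  assumes "w \<bullet> Z = 0"
  shows "of_real (mpow (Z + Y) \<gamma>) * f (Z + Y) *
      exp (complex_of_real (- (norm ((Z + Y) - Z))\<^sup>2) - \<i> * complex_of_real (w \<bullet> (Z + Y)))
    = Gf \<gamma> f Z Y * Ew w Y"
proof -
  have "mpow (Z + Y) \<gamma> = (\<Prod>l\<in>UNIV. (Y $ l + Z $ l) ^ \<gamma> l)"
    by (simp add: mpow_def add.commute)
  moreover have "exp (complex_of_real (- (norm ((Z + Y) - Z))\<^sup>2) - \<i> * complex_of_real (w \<bullet> (Z + Y)))
      = complex_of_real (exp (- (norm Y)\<^sup>2)) * Ew w Y"
  proof -
    have e1: "complex_of_real (- (norm ((Z + Y) - Z))\<^sup>2) - \<i> * complex_of_real (w \<bullet> (Z + Y))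
        = complex_of_real (- (norm Y)\<^sup>2) + (- \<i> * complex_of_real (w \<bullet> Y))"
      using assms by (simp add: inner_add_right)
    show ?thesis unfolding e1 exp_add Ew_def exp_of_real ..
  qed
  ultimately show ?thesis
    by (simp add: Gf_def Gr_def mult.commute mult.left_commute)
qed



lemma my_inb:
  fixes f :: "'a \<Rightarrow> complex" and g :: "'a \<Rightarrow> real"
  assumes "integrable M f" "integrable M g" "\<And>x. x \<in> space M \<Longrightarrow> norm (f x) \<le> g x"
  shows "norm (integral\<^sup>L M f) \<le> integral\<^sup>L M g"
proof -
  have "norm (integral\<^sup>L M f) \<le> (\<integral>x. norm (f x) \<partial>M)" by (rule integral_norm_bound)
  also have "\<dots> \<le> integral\<^sup>L M g"
    by (rule integral_mono) (use assms in \<open>auto intro: integrable_norm\<close>)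
  finally show ?thesis .
qed

lemma core:
  fixes \<gamma> :: "'n::finite \<Rightarrow> nat" and m :: nat
  shows "\<exists>C. \<forall>(f :: real ^ 'n \<Rightarrow> complex) S Z w. (\<forall>ks x. dpartial ks f differentiable (at x)) \<longrightarrow>
     (\<forall>j k x. j \<le> m + sum \<gamma> UNIV \<longrightarrow> cmod (dpartial (replicate j k) f x) \<le> S) \<longrightarrow>
     w \<bullet> Z = 0 \<longrightarrow> norm w = norm Z \<longrightarrow>
     cmod (integral UNIV (\<lambda>X. of_real (mpow X \<gamma>) * f X *
        exp (complex_of_real (- (norm (X - Z))\<^sup>2) - \<i> * complex_of_real (w \<bullet> X))))
     \<le> C * (1 + norm Z) powr (- real m) * S"
proof -
  define N where "N = m + sum \<gamma> UNIV"
  obtain K where K0: "K \<ge> 0" and K: "\<forall>b\<le>sum \<gamma> UNIV. \<forall>i\<le>N. \<forall>s. \<bar>psi b i s\<bar> \<le> K * exp (- s\<^sup>2 / 2)"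
    using psi_unif by blast
  define n where "n = real CARD('n)"
  define R0 where "R0 = pi * sqrt n + 1"
  define ID where "ID = (\<integral>Y. Dg Y \<partial>(lborel :: (real ^ 'n) measure))"
  define Eg where "Eg = (\<Prod>l\<in>(UNIV :: 'n set). exp (real (\<gamma> l) ^ 2 / 2))"
  define C1 where "C1 = (2 * pi * sqrt n) ^ N * K * exp (real N ^ 2 / 2) * Eg * ID"
  define C2 where "C2 = (1 + R0) ^ N * Eg * ID"
  have ID0: "0 \<le> ID" unfolding ID_def by (rule integral_nonneg_AE) (simp add: Dg_nonneg)
  have Eg0: "0 \<le> Eg" unfolding Eg_def by (simp add: prod_nonneg)
  have n1: "1 \<le> n" unfolding n_def by simp
  have R0pos: "1 \<le> R0" unfolding R0_def using n1 by simp
  have C10: "0 \<le> C1" unfolding C1_def using K0 ID0 Eg0 n1 by (intro mult_nonneg_nonneg) auto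
  have C20: "0 \<le> C2" unfolding C2_def using R0pos ID0 Eg0 by simp
  have intD: "integrable lborel (Dg :: real ^ 'n \<Rightarrow> real)" unfolding Dg_def by (rule D_int)
  show ?thesis
  proof (intro exI[of _ "C1 + C2"] allI impI)
    fix f :: "real ^ 'n \<Rightarrow> complex" and S and Z w :: "real ^ 'n"
    assume fd: "\<forall>ks x. dpartial ks f differentiable (at x)"
      and fS: "\<forall>j k x. j \<le> m + sum \<gamma> UNIV \<longrightarrow> cmod (dpartial (replicate j k) f x) \<le> S"
      and wZ: "w \<bullet> Z = 0" and nw: "norm w = norm Z"
    have fdiff: "\<And>x. f differentiable (at x)" using fd by (metis dpartial.simps(1))
    have fb: "\<And>x. cmod (f x) \<le> S" using fS by (metis dpartial.simps(1) replicate_0 le0)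
    have S0: "0 \<le> S" using fb by (meson norm_ge_zero order.trans)
    define F where "F X = of_real (mpow X \<gamma>) * f X *
        exp (complex_of_real (- (norm (X - Z))\<^sup>2) - \<i> * complex_of_real (w \<bullet> X))" for X
    define P where "P = 1 + norm Z"
    have P1: "1 \<le> P" unfolding P_def by simp
    have Feq: "F (Z + Y) = Gf \<gamma> f Z Y * Ew w Y" for Y
      unfolding F_def by (rule integrand_shift[OF wZ])
    have intGE: "integrable lborel (\<lambda>Y. Gf \<gamma> f Z Y * Ew w Y)" by (rule GE_int[OF fdiff fb])
    have intFZ: "integrable lborel (\<lambda>Y. F (Z + Y))" unfolding Feq by (rule intGE)
    have "integrable lborel (\<lambda>Y. F (Z + (- Z + Y)))" by (rule transl_int(1)[OF intFZ])
    then have intF: "integrable lborel F" by simp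
    have Ieq: "integral UNIV F = (\<integral>Y. Gf \<gamma> f Z Y * Ew w Y \<partial>lborel)"
      using integral_lborel[OF intF] transl_int(2)[OF intF, of Z] Feq by simp
    have Tceq: "Tc \<gamma> Z = P ^ sum \<gamma> UNIV * Eg" unfolding Tc_eq P_def Eg_def ..
    have powr_eq: "P powr (- real m) = 1 / P ^ m"
      using P1 by (simp add: powr_minus powr_realpow divide_inverse)
    have PN: "P ^ N = P ^ m * P ^ sum \<gamma> UNIV" unfolding N_def by (simp add: power_add)
    have "cmod (integral UNIV F) \<le> C1 * P powr (- real m) * S \<or> cmod (integral UNIV F) \<le> C2 * P powr (- real m) * S"
    proof (cases "norm Z < R0")
      case True
      have "cmod (integral UNIV F) \<le> (\<integral>Y. S * Tc \<gamma> Z * Dg (Y :: real ^ 'n) \<partial>lborel)"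
        unfolding Ieq
      proof (rule my_inb[OF intGE])
        show "integrable lborel (\<lambda>Y::real ^ 'n. S * Tc \<gamma> Z * Dg Y)" using intD by simp
        fix Y
        have "cmod (Gf \<gamma> f Z Y) \<le> S * (Tc \<gamma> Z * Dg Y)" by (rule Gf_bound) (rule fb)
        then show "norm (Gf \<gamma> f Z Y * Ew w Y) \<le> S * Tc \<gamma> Z * Dg Y"
          by (simp add: norm_mult Ew_norm mult.assoc)
      qed
      also have "\<dots> = S * Tc \<gamma> Z * ID" unfolding ID_def by simp
      also have "\<dots> = S * P ^ sum \<gamma> UNIV * Eg * ID" unfolding Tceq by simp
      also have "\<dots> \<le> C2 * P powr (- real m) * S"
      proof -
        have "P ^ m * P ^ sum \<gamma> UNIV \<le> (1 + R0) ^ m * (1 + R0) ^ sum \<gamma> UNIV"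
          using True P1 R0pos unfolding P_def by (intro mult_mono power_mono) auto
        then have "P ^ sum \<gamma> UNIV \<le> (1 + R0) ^ N / P ^ m"
          using P1 by (simp add: N_def power_add field_simps)
        then have "S * P ^ sum \<gamma> UNIV * (Eg * ID) \<le> S * ((1 + R0) ^ N / P ^ m) * (Eg * ID)"
          using S0 Eg0 ID0 by (intro mult_right_mono mult_left_mono) auto
        then show ?thesis unfolding C2_def powr_eq by (simp add: field_simps)
      qed
      finally show ?thesis by simp
    next
      case False
      then have ZR: "R0 \<le> norm Z" by simp
      obtain k where kmax: "\<forall>l. \<bar>w $ l\<bar> \<le> \<bar>w $ k\<bar>" using exists_max_coord by blast
      have nwk: "norm Z \<le> sqrt n * \<bar>w $ k\<bar>" using norm_le_maxcoord[OF kmax] nw n_def by simp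
      have Zpos: "0 < norm Z" using ZR R0pos by linarith
      have wk0: "w $ k \<noteq> 0" using nwk Zpos by auto
      define c where "c = pi / w $ k"
      have cabs: "\<bar>c\<bar> = pi / \<bar>w $ k\<bar>" unfolding c_def by simp
      have c_le: "\<bar>c\<bar> \<le> pi * sqrt n / norm Z"
        unfolding cabs using nwk Zpos wk0 by (simp add: field_simps)
      have c1: "\<bar>c\<bar> \<le> 1"
      proof -
        have "pi * sqrt n / norm Z \<le> 1" using ZR Zpos unfolding R0_def by (simp add: field_simps)
        then show ?thesis using c_le by simp
      qed
      have c2: "\<bar>c\<bar> \<le> 2 * pi * sqrt n / P"
      proof -
        have "P \<le> 2 * norm Z" unfolding P_def using ZR R0pos by simp
        then have "pi * sqrt n / norm Z \<le> 2 * pi * sqrt n / P"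
          using Zpos P1 n1 by (simp add: field_simps mult_left_mono)
        then show ?thesis using c_le by simp
      qed
      have Esh: "\<And>Y. Ew w (Y + c *\<^sub>R axis k 1) = - Ew w Y" unfolding c_def by (rule Ew_shift[OF wk0])
      note it = DD_iter[OF intGE Esh, of N]
      let ?B = "\<lambda>Y :: real ^ 'n. \<bar>c\<bar> ^ N * (S * 2 ^ N * K * exp (real N ^ 2 / 2) * (Tc \<gamma> Z * Dg Y))"
      have lb: "cmod ((DD (c *\<^sub>R axis k 1) ^^ N) (Gf \<gamma> f Z) Y) \<le> ?B Y" for Y
      proof (rule line_bound[where Bb = "sum \<gamma> UNIV" and Bi = N])
        show "\<And>ks x. dpartial ks f differentiable (at x)" using fd by blast
        show "\<And>j x. j \<le> N \<Longrightarrow> cmod (dpartial (replicate j k) f x) \<le> S" using fS N_def by blast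
        show "\<forall>b\<le>sum \<gamma> UNIV. \<forall>i\<le>N. \<forall>s. \<bar>psi b i s\<bar> \<le> K * exp (- s\<^sup>2 / 2)" by (rule K)
        show "\<gamma> k \<le> sum \<gamma> UNIV" by (rule member_le_sum) auto
      qed (use K0 c1 in auto)
      have "cmod (\<integral>Y. (DD (c *\<^sub>R axis k 1) ^^ N) (Gf \<gamma> f Z) Y * Ew w Y \<partial>lborel) \<le> (\<integral>Y. ?B Y \<partial>lborel)"
      proof (rule my_inb)
        show "integrable lborel (\<lambda>Y. (DD (c *\<^sub>R axis k 1) ^^ N) (Gf \<gamma> f Z) Y * Ew w Y)" using it by blast
        show "integrable lborel ?B" using intD by simp
        fix Y show "norm ((DD (c *\<^sub>R axis k 1) ^^ N) (Gf \<gamma> f Z) Y * Ew w Y) \<le> ?B Y"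
          using lb[of Y] by (simp add: norm_mult Ew_norm)
      qed
      also have "(\<integral>Y. ?B Y \<partial>lborel) = \<bar>c\<bar> ^ N * (S * 2 ^ N * K * exp (real N ^ 2 / 2) * Tc \<gamma> Z) * ID"
        unfolding ID_def by (simp add: mult.assoc)
      finally have b1: "cmod (\<integral>Y. (DD (c *\<^sub>R axis k 1) ^^ N) (Gf \<gamma> f Z) Y * Ew w Y \<partial>lborel)
          \<le> \<bar>c\<bar> ^ N * (S * 2 ^ N * K * exp (real N ^ 2 / 2) * Tc \<gamma> Z) * ID" .
      have "cmod (integral UNIV F) = (1/2) ^ N * cmod (\<integral>Y. (DD (c *\<^sub>R axis k 1) ^^ N) (Gf \<gamma> f Z) Y * Ew w Y \<partial>lborel)"
        unfolding Ieq using it by (simp add: norm_mult norm_power)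
      also have "\<dots> \<le> (1/2) ^ N * (\<bar>c\<bar> ^ N * (S * 2 ^ N * K * exp (real N ^ 2 / 2) * Tc \<gamma> Z) * ID)"
        by (intro mult_left_mono b1) simp
      also have "\<dots> = \<bar>c\<bar> ^ N * (S * K * exp (real N ^ 2 / 2) * Tc \<gamma> Z * ID)"
        by (simp add: power_one_over field_simps)
      also have "\<dots> \<le> (2 * pi * sqrt n / P) ^ N * (S * K * exp (real N ^ 2 / 2) * Tc \<gamma> Z * ID)"
        using S0 K0 Tc_nonneg[of \<gamma> Z] ID0
        by (intro mult_right_mono power_mono c2) auto
      also have "\<dots> = C1 * S * (P ^ sum \<gamma> UNIV / P ^ N)"
        unfolding C1_def Tceq by (simp add: power_divide field_simps)
      also have "P ^ sum \<gamma> UNIV / P ^ N = P powr (- real m)"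
        unfolding powr_eq PN using P1 by (simp add: field_simps)
      finally show ?thesis by (simp add: mult.commute mult.left_commute)
    qed
    moreover have q0: "0 \<le> P powr (- real m) * S" using S0 by simp
    moreover have "0 \<le> C1 * (P powr (- real m) * S)" "0 \<le> C2 * (P powr (- real m) * S)"
      using C10 C20 q0 by simp_all
    ultimately have "cmod (integral UNIV F) \<le> (C1 + C2) * P powr (- real m) * S"
      by (simp add: distrib_right mult.assoc) linarith
    then show "cmod (integral UNIV (\<lambda>X. of_real (mpow X \<gamma>) * f X *
        exp (complex_of_real (- (norm (X - Z))\<^sup>2) - \<i> * complex_of_real (w \<bullet> X))))
     \<le> (C1 + C2) * (1 + norm Z) powr (- real m) * S"
      unfolding F_def P_def by simp
  qed
qed



lemma sum_UNIV_plus: "(\<Sum>k\<in>(UNIV::('d::finite + 'd) set). g k) = (\<Sum>i\<in>UNIV. g (Inl i)) + (\<Sum>i\<in>UNIV. g (Inr i))"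
  using sum.Plus[of "UNIV :: 'd set" "UNIV :: 'd set" g] by (simp add: o_def)

lemma Jmat_inner: "Jmat Z \<bullet> (Z :: real ^ ('d::finite + 'd)) = 0"
  by (simp add: inner_vec_def sum_UNIV_plus Jmat_def sum_negf mult.commute)

lemma Jmat_norm: "norm (Jmat Z) = norm (Z :: real ^ ('d::finite + 'd))"
proof -
  have "(norm (Jmat Z))\<^sup>2 = (norm Z)\<^sup>2"
    by (simp add: norm_sq_vec sum_UNIV_plus Jmat_def add.commute)
  then show ?thesis by (simp add: power2_eq_iff_nonneg)
qed

lemma mi_len_single: "mi_len (\<lambda>l::'n::finite. if l = k then j else 0) = j"
  by (simp add: mi_len_def)

theorem lemma7:
  fixes \<gamma> :: "'d::finite + 'd \<Rightarrow> nat" and m :: nat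
  assumes "m > 0"
  shows "\<exists>C. \<forall>f \<in> (O0 :: (real ^ ('d + 'd) \<Rightarrow> complex) set). \<forall>Z :: real ^ ('d + 'd).
    cmod (integral UNIV (\<lambda>X. of_real (mpow X \<gamma>) * f X *
        exp (complex_of_real (- (norm (X - Z))\<^sup>2) - \<i> * complex_of_real (Jmat Z \<bullet> X))))
    \<le> C * (1 + norm Z) powr (- real m) *
       (SUP \<alpha> \<in> {\<alpha>. mi_len \<alpha> \<le> m + mi_len \<gamma>}. SUP Y. cmod (mderiv \<alpha> f Y))"
proof -
  obtain C where C: "\<forall>(f :: real ^ ('d + 'd) \<Rightarrow> complex) S Z w. (\<forall>ks x. dpartial ks f differentiable (at x)) \<longrightarrow>
     (\<forall>j k x. j \<le> m + sum \<gamma> UNIV \<longrightarrow> cmod (dpartial (replicate j k) f x) \<le> S) \<longrightarrow>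
     w \<bullet> Z = 0 \<longrightarrow> norm w = norm Z \<longrightarrow>
     cmod (integral UNIV (\<lambda>X. of_real (mpow X \<gamma>) * f X *
        exp (complex_of_real (- (norm (X - Z))\<^sup>2) - \<i> * complex_of_real (w \<bullet> X))))
     \<le> C * (1 + norm Z) powr (- real m) * S"
    using core[where \<gamma>=\<gamma> and m=m] by blast
  show ?thesis
  proof (intro exI[of _ C] ballI allI)
    fix f :: "real ^ ('d + 'd) \<Rightarrow> complex" and Z :: "real ^ ('d + 'd)"
    assume f: "f \<in> O0"
    define A where "A = {\<alpha> :: 'd + 'd \<Rightarrow> nat. mi_len \<alpha> \<le> m + mi_len \<gamma>}"
    define S where "S = (SUP \<alpha> \<in> A. SUP Y. cmod (mderiv \<alpha> f Y))"
    have fd: "\<forall>ks x. dpartial ks f differentiable (at x)" using f by (simp add: O0_def)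
    have bdd1: "bdd_above (range (\<lambda>Y. cmod (mderiv \<alpha> f Y)))" for \<alpha>
    proof -
      have "bounded (range (dpartial (mi_list \<alpha>) f))" using f by (simp add: O0_def)
      then obtain B where "\<forall>x\<in>range (dpartial (mi_list \<alpha>) f). norm x \<le> B" by (auto simp: bounded_iff)
      then show ?thesis unfolding mderiv_def by (intro bdd_aboveI[of _ B]) auto
    qed
    have finA: "finite A"
    proof (rule finite_subset)
      show "A \<subseteq> Pi\<^sub>E (UNIV :: ('d + 'd) set) (\<lambda>_. {..m + mi_len \<gamma>})"
      proof
        fix \<alpha> assume "\<alpha> \<in> A"
        then have "mi_len \<alpha> \<le> m + mi_len \<gamma>" by (simp add: A_def)
        moreover have "\<alpha> l \<le> mi_len \<alpha>" for l unfolding mi_len_def by (rule member_le_sum) auto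
        ultimately show "\<alpha> \<in> Pi\<^sub>E (UNIV :: ('d + 'd) set) (\<lambda>_. {..m + mi_len \<gamma>})" by (auto simp: PiE_UNIV_domain intro: order.trans)
      qed
      show "finite (Pi\<^sub>E (UNIV :: ('d + 'd) set) (\<lambda>_. {..m + mi_len \<gamma>}))" by (rule finite_PiE) auto
    qed
    have bdd2: "bdd_above ((\<lambda>\<alpha>. SUP Y. cmod (mderiv \<alpha> f Y)) ` A)"
      using finA by simp
    have fS: "\<forall>j k x. j \<le> m + sum \<gamma> UNIV \<longrightarrow> cmod (dpartial (replicate j k) f x) \<le> S"
    proof (intro allI impI)
      fix j and k :: "'d + 'd" and x assume j: "j \<le> m + sum \<gamma> UNIV"
      define \<alpha> where "\<alpha> = (\<lambda>l. if l = k then j else 0)"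
      have aA: "\<alpha> \<in> A" unfolding A_def \<alpha>_def using j by (simp add: mi_len_single mi_len_def)
      have "cmod (dpartial (replicate j k) f x) = cmod (mderiv \<alpha> f x)"
        by (simp add: mderiv_def \<alpha>_def mi_list_single)
      also have "\<dots> \<le> (SUP Y. cmod (mderiv \<alpha> f Y))" by (rule cSUP_upper[OF _ bdd1]) simp
      also have "\<dots> \<le> S" unfolding S_def by (rule cSUP_upper[OF aA bdd2])
      finally show "cmod (dpartial (replicate j k) f x) \<le> S" .
    qed
    have "cmod (integral UNIV (\<lambda>X. of_real (mpow X \<gamma>) * f X *
        exp (complex_of_real (- (norm (X - Z))\<^sup>2) - \<i> * complex_of_real (Jmat Z \<bullet> X))))
     \<le> C * (1 + norm Z) powr (- real m) * S"
      using C fd fS Jmat_inner[of Z] Jmat_norm[of Z] by blast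
    then show "cmod (integral UNIV (\<lambda>X. of_real (mpow X \<gamma>) * f X *
        exp (complex_of_real (- (norm (X - Z))\<^sup>2) - \<i> * complex_of_real (Jmat Z \<bullet> X))))
    \<le> C * (1 + norm Z) powr (- real m) *
       (SUP \<alpha> \<in> {\<alpha>. mi_len \<alpha> \<le> m + mi_len \<gamma>}. SUP Y. cmod (mderiv \<alpha> f Y))"
      unfolding S_def A_def .
  qed
qed

end
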